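(* Let $E$ be a finite Galois extension of $\mathbb{Q}$ with Galois group $G$, with a fixed embedding $E\hookrightarrow\mathbb{C}$, and let $V$ be a finite-dimensional $E$-vector space. Let $W_\mathbb{Q}\subseteq V_\mathbb{Q}$ be any $\mathbb{Q}$-subspace of the underlying $\mathbb{Q}$-vector space of $V$, and let $W_\mathbb{C}=W_\mathbb{Q}\otimes_\mathbb{Q}\mathbb{C}\subseteq V_\mathbb{C}$. (i) If there exists $\sigma_0\in G$ with $P_{\sigma_0}(W_\mathbb{C})=V_{\sigma_0}$, then $P_\sigma(W_\mathbb{C})=V_\sigma$ for all $\sigma\in G$. (ii) If there exist $\sigma_0\neq\tau_0$ in $G$ with $P_{\sigma_0,\tau_0}(W_\mathbb{C})=V_{\sigma_0}\oplus V_{\tau_0}$, then $P_{\sigma,\tau}(W_\mathbb{C})=V_\sigma\oplus V_\tau$ for every pair $(\sigma,\tau)=(\kappa\sigma_0,\kappa\tau_0)$ with $\kappa\in G$.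
   Context: $V_\mathbb{C}=V\otimes_\mathbb{Q}\mathbb{C}$, on which $E$ acts via the first factor, making it a module over $E\otimes_\mathbb{Q}\mathbb{C}$. Identifying each $\sigma\in G$ with the embedding $E\xrightarrow{\sigma}E\subset\mathbb{C}$, one has $V_\mathbb{C}=\bigoplus_{\sigma\in G}V_\sigma$ where $V_\sigma=\{w\in V_\mathbb{C}: (e\otimes1)w=\sigma(e)w \text{ for all } e\in E\}$. $P_\sigma:V_\mathbb{C}\to V_\sigma$ is the $\mathbb{C}$-linear projection onto the summand $V_\sigma$, and for $\sigma\neq\tau$, $P_{\sigma,\tau}=P_\sigma\oplus P_\tau:V_\mathbb{C}\to V_\sigma\oplus V_\tau$. *)

theory Defs
  imports "HOL-Analysis.Analysis"
begin

text \<open>Number fields are modelled as subfields E of the complex numbers (this is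
the fixed embedding of E into C).\<close>

definition subfield_C :: "complex set \<Rightarrow> bool" where
  "subfield_C E \<longleftrightarrow> 0 \<in> E \<and> 1 \<in> E \<and> (\<forall>x\<in>E. \<forall>y\<in>E. x + y \<in> E \<and> x * y \<in> E)
     \<and> (\<forall>x\<in>E. - x \<in> E) \<and> (\<forall>x\<in>E. x \<noteq> 0 \<longrightarrow> inverse x \<in> E)"

definition finite_dim_over_Q :: "complex set \<Rightarrow> bool" where
  "finite_dim_over_Q E \<longleftrightarrow> (\<exists>B. finite B \<and> B \<subseteq> E \<and>
     (\<forall>x\<in>E. \<exists>c. (\<forall>b\<in>B. c b \<in> \<rat>) \<and> x = (\<Sum>b\<in>B. c b * b)))"

text \<open>Field embeddings E \<rightarrow> C (ring homomorphisms; they automatically fix Q),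
  made canonical by extending with 0 outside E.\<close>
definition embeddings :: "complex set \<Rightarrow> (complex \<Rightarrow> complex) set" where
  "embeddings E = {\<sigma>. (\<forall>x\<in>E. \<forall>y\<in>E. \<sigma> (x + y) = \<sigma> x + \<sigma> y \<and> \<sigma> (x * y) = \<sigma> x * \<sigma> y)
      \<and> \<sigma> 1 = 1 \<and> (\<forall>x. x \<notin> E \<longrightarrow> \<sigma> x = 0)}"

text \<open>Finite Galois extension of Q (char 0, so Galois = normal).\<close>
definition galois_over_Q :: "complex set \<Rightarrow> bool" where
  "galois_over_Q E \<longleftrightarrow> subfield_C E \<and> finite_dim_over_Q E \<and> (\<forall>\<sigma>\<in>embeddings E. \<sigma> ` E \<subseteq> E)"

definition Gal :: "complex set \<Rightarrow> (complex \<Rightarrow> complex) set" where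
  "Gal E = {\<sigma> \<in> embeddings E. \<sigma> ` E = E}"

text \<open>V = E^n (coordinates w.r.t. an E-basis).\<close>
definition Vspace :: "complex set \<Rightarrow> (complex ^ 'n) set" where
  "Vspace E = {v. \<forall>i. v $ i \<in> E}"

definition Q_subspace :: "complex set \<Rightarrow> (complex ^ 'n) set \<Rightarrow> bool" where
  "Q_subspace E W \<longleftrightarrow> W \<subseteq> Vspace E \<and> 0 \<in> W \<and> (\<forall>x\<in>W. \<forall>y\<in>W. x + y \<in> W)
     \<and> (\<forall>q\<in>\<rat>. \<forall>x\<in>W. q *s x \<in> W)"

text \<open>V_C = V \<otimes>_Q C, realised via the canonical isomorphism
  v \<otimes> z \<mapsto> (\<sigma> \<mapsto> z \<cdot> \<sigma>(v)) onto families indexed by G of vectors in C^n.\<close>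
definition VC :: "complex set \<Rightarrow> ((complex \<Rightarrow> complex) \<Rightarrow> complex ^ 'n) set" where
  "VC E = {f. \<forall>\<sigma>. \<sigma> \<notin> Gal E \<longrightarrow> f \<sigma> = 0}"

text \<open>Image of v \<otimes> 1.\<close>
definition iota :: "complex set \<Rightarrow> complex ^ 'n \<Rightarrow> (complex \<Rightarrow> complex) \<Rightarrow> complex ^ 'n" where
  "iota E v = (\<lambda>\<sigma>. if \<sigma> \<in> Gal E then (\<chi> i. \<sigma> (v $ i)) else 0)"

text \<open>W_C = W_Q \<otimes>_Q C inside V_C, i.e. the C-span of the image of W_Q.\<close>
definition WC :: "complex set \<Rightarrow> (complex ^ 'n) set \<Rightarrow> ((complex \<Rightarrow> complex) \<Rightarrow> complex ^ 'n) set" where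
  "WC E W = {f. \<exists>F c. finite F \<and> F \<subseteq> W \<and> f = (\<lambda>\<sigma>. \<Sum>w\<in>F. c w *s iota E w \<sigma>)}"

text \<open>Action of e \<in> E on V_C via the first tensor factor: e \<otimes> 1.\<close>
definition Eact :: "complex \<Rightarrow> ((complex \<Rightarrow> complex) \<Rightarrow> complex ^ 'n) \<Rightarrow> ((complex \<Rightarrow> complex) \<Rightarrow> complex ^ 'n)" where
  "Eact e f = (\<lambda>\<sigma>. \<sigma> e *s f \<sigma>)"

definition Vsig :: "complex set \<Rightarrow> (complex \<Rightarrow> complex) \<Rightarrow> ((complex \<Rightarrow> complex) \<Rightarrow> complex ^ 'n) set" where
  "Vsig E \<sigma> = {w \<in> VC E. \<forall>e\<in>E. Eact e w = (\<lambda>\<tau>. \<sigma> e *s w \<tau>)}"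

text \<open>Projection onto the summand V_sigma of V_C = (direct sum over G of V_sigma).\<close>
definition Psig :: "(complex \<Rightarrow> complex) \<Rightarrow> ((complex \<Rightarrow> complex) \<Rightarrow> complex ^ 'n) \<Rightarrow> ((complex \<Rightarrow> complex) \<Rightarrow> complex ^ 'n)" where
  "Psig \<sigma> f = (\<lambda>\<rho>. if \<rho> = \<sigma> then f \<rho> else 0)"

definition Ppair :: "(complex \<Rightarrow> complex) \<Rightarrow> (complex \<Rightarrow> complex) \<Rightarrow> ((complex \<Rightarrow> complex) \<Rightarrow> complex ^ 'n) \<Rightarrow> ((complex \<Rightarrow> complex) \<Rightarrow> complex ^ 'n)" where
  "Ppair \<sigma> \<tau> f = (\<lambda>\<rho>. if \<rho> = \<sigma> \<or> \<rho> = \<tau> then f \<rho> else 0)"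

definition Vsum :: "((complex \<Rightarrow> complex) \<Rightarrow> complex ^ 'n) set \<Rightarrow> ((complex \<Rightarrow> complex) \<Rightarrow> complex ^ 'n) set \<Rightarrow> ((complex \<Rightarrow> complex) \<Rightarrow> complex ^ 'n) set" where
  "Vsum A B = {(\<lambda>\<rho>. g \<rho> + h \<rho>) | g h. g \<in> A \<and> h \<in> B}"

end

theory Submission
  imports Defs
begin


lemma sf_basic:
  assumes "subfield_C E"
  shows "0 \<in> E" "1 \<in> E" "x \<in> E \<Longrightarrow> y \<in> E \<Longrightarrow> x + y \<in> E"
    "x \<in> E \<Longrightarrow> y \<in> E \<Longrightarrow> x * y \<in> E" "x \<in> E \<Longrightarrow> - x \<in> E"
    "x \<in> E \<Longrightarrow> y \<in> E \<Longrightarrow> x - y \<in> E" "x \<in> E \<Longrightarrow> y \<in> E \<Longrightarrow> x / y \<in> E"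
proof -
  show "0 \<in> E" "1 \<in> E" using assms unfolding subfield_C_def by auto
  show "x \<in> E \<Longrightarrow> y \<in> E \<Longrightarrow> x + y \<in> E" "x \<in> E \<Longrightarrow> y \<in> E \<Longrightarrow> x * y \<in> E" "x \<in> E \<Longrightarrow> - x \<in> E"
    using assms unfolding subfield_C_def by auto
  show "x \<in> E \<Longrightarrow> y \<in> E \<Longrightarrow> x - y \<in> E" using assms unfolding subfield_C_def
    by (metis diff_conv_add_uminus)
  assume "x \<in> E" "y \<in> E"
  then show "x / y \<in> E" using assms unfolding subfield_C_def
    by (metis divide_inverse inverse_zero)
qed

lemma sf_sum:
  assumes "subfield_C E" "\<And>j. j \<in> J \<Longrightarrow> f j \<in> E"
  shows "(\<Sum>j\<in>J. f j) \<in> E"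
  using assms(2)
proof (induction J rule: infinite_finite_induct)
  case (infinite A) then show ?case using sf_basic[OF assms(1)] by simp
next
  case empty then show ?case using sf_basic[OF assms(1)] by simp
next
  case (insert x F) then show ?case using sf_basic[OF assms(1)] by simp
qed

lemma elim_sum:
  fixes c a :: "'j \<Rightarrow> complex"
  shows "(\<Sum>j\<in>J. c j * (a j - (b j / p) * q)) = (\<Sum>j\<in>J. c j * a j) - (\<Sum>j\<in>J. c j * b j) / p * q"
proof -
  have "(\<Sum>j\<in>J. c j * ((b j / p) * q)) = (\<Sum>j\<in>J. c j * b j) / p * q"
    by (simp add: sum_divide_distrib sum_distrib_right sum_distrib_left mult_ac)
  then show ?thesis by (simp add: right_diff_distrib sum_subtractf)
qed

lemma solve_sub:
  assumes sf: "subfield_C E" and fR: "finite R" and fJ: "finite J"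
  shows "(\<forall>j\<in>J. \<forall>r\<in>R. a j r \<in> E) \<Longrightarrow> (\<forall>r\<in>R. t r \<in> E) \<Longrightarrow>
     (\<forall>r\<in>R. (\<Sum>j\<in>J. c j * a j r) = t r) \<Longrightarrow>
     \<exists>d. (\<forall>j\<in>J. d j \<in> E) \<and> (\<forall>r\<in>R. (\<Sum>j\<in>J. d j * a j r) = t r)"
  using fR
proof (induction R arbitrary: a t c rule: finite_induct)
  case empty
  then show ?case using sf_basic[OF sf] by (intro exI[of _ "\<lambda>_. 0"]) auto
next
  case (insert r0 R)
  show ?case
  proof (cases "\<forall>j\<in>J. a j r0 = 0")
    case True
    have t0: "t r0 = 0" using insert.prems(3) True by simp
    obtain d where d: "\<forall>j\<in>J. d j \<in> E" "\<forall>r\<in>R. (\<Sum>j\<in>J. d j * a j r) = t r"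
      using insert.IH[of a t c] insert.prems by auto
    show ?thesis using d True t0 by (intro exI[of _ d]) auto
  next
    case False
    then obtain j0 where j0: "j0 \<in> J" "a j0 r0 \<noteq> 0" by auto
    define p where "p = a j0 r0"
    define a' where "a' = (\<lambda>j r. a j r - (a j r0 / p) * a j0 r)"
    define t' where "t' = (\<lambda>r. t r - (t r0 / p) * a j0 r)"
    have pE: "p \<in> E" using insert.prems(1) j0 unfolding p_def by auto
    have a'E: "\<forall>j\<in>J. \<forall>r\<in>R. a' j r \<in> E" unfolding a'_def
      using insert.prems(1) j0 sf_basic[OF sf] pE by auto
    have t'E: "\<forall>r\<in>R. t' r \<in> E" unfolding t'_def
      using insert.prems(1,2) j0 sf_basic[OF sf] pE by auto
    have c': "\<forall>r\<in>R. (\<Sum>j\<in>J. c j * a' j r) = t' r"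
    proof
      fix r assume r: "r \<in> R"
      have "(\<Sum>j\<in>J. c j * a' j r) = (\<Sum>j\<in>J. c j * a j r) - (\<Sum>j\<in>J. c j * a j r0) / p * a j0 r"
        unfolding a'_def by (rule elim_sum)
      also have "\<dots> = t' r" using insert.prems(3) r unfolding t'_def by simp
      finally show "(\<Sum>j\<in>J. c j * a' j r) = t' r" .
    qed
    obtain d where d: "\<forall>j\<in>J. d j \<in> E" "\<forall>r\<in>R. (\<Sum>j\<in>J. d j * a' j r) = t' r"
      using insert.IH[of a' t' c] a'E t'E c' by auto
    define \<delta> where "\<delta> = t r0 / p - (\<Sum>j\<in>J. d j * a j r0) / p"
    define d' where "d' = (\<lambda>j. d j + (if j = j0 then \<delta> else 0))"
    have sumd: "(\<Sum>j\<in>J. d' j * a j r) = (\<Sum>j\<in>J. d j * a j r) + \<delta> * a j0 r" for r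
      proof -
      have "(\<Sum>j\<in>J. d' j * a j r) = (\<Sum>j\<in>J. d j * a j r + (if j = j0 then \<delta> * a j r else 0))"
        unfolding d'_def by (intro sum.cong) (auto simp: distrib_right)
      also have "\<dots> = (\<Sum>j\<in>J. d j * a j r) + \<delta> * a j0 r"
        using j0 fJ by (simp add: sum.distrib)
      finally show ?thesis .
    qed
    have \<delta>E: "\<delta> \<in> E" unfolding \<delta>_def using sf_basic[OF sf] pE insert.prems(1,2) d(1)
      by (intro sf_basic(6)[OF sf] sf_basic(7)[OF sf] sf_sum[OF sf]) auto
    show ?thesis
    proof (intro exI[of _ d'] conjI ballI)
      fix j assume "j \<in> J" then show "d' j \<in> E" unfolding d'_def using d(1) \<delta>E sf_basic[OF sf] by auto
    next
      fix r assume r: "r \<in> insert r0 R"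
      show "(\<Sum>j\<in>J. d' j * a j r) = t r"
      proof (cases "r = r0")
        case True
        then show ?thesis unfolding sumd \<delta>_def using j0 by (simp add: p_def field_simps)
      next
        case False
        then have rR: "r \<in> R" using r by auto
        have "(\<Sum>j\<in>J. d j * a' j r) = (\<Sum>j\<in>J. d j * a j r) - (\<Sum>j\<in>J. d j * a j r0) / p * a j0 r"
          unfolding a'_def by (rule elim_sum)
        then have "(\<Sum>j\<in>J. d j * a j r) = t' r + (\<Sum>j\<in>J. d j * a j r0) / p * a j0 r"
          using d(2) rR by simp
        then show ?thesis unfolding sumd \<delta>_def t'_def by (simp add: algebra_simps)
      qed
    qed
  qed
qed

definition app :: "(complex \<Rightarrow> complex) \<Rightarrow> complex ^ 'n \<Rightarrow> complex ^ 'n" where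
  "app \<rho> w = (\<chi> i. \<rho> (w $ i))"

definition rep :: "(complex ^ 'n) set \<Rightarrow> (complex \<Rightarrow> complex) set \<Rightarrow> ((complex \<Rightarrow> complex) \<Rightarrow> complex ^ 'n) \<Rightarrow> bool" where
  "rep W T g \<longleftrightarrow> (\<exists>F c. finite F \<and> F \<subseteq> W \<and> (\<forall>\<rho>\<in>T. g \<rho> = (\<Sum>w\<in>F. c w *s app \<rho> w)))"

definition repE :: "complex set \<Rightarrow> (complex ^ 'n) set \<Rightarrow> (complex \<Rightarrow> complex) set \<Rightarrow> ((complex \<Rightarrow> complex) \<Rightarrow> complex ^ 'n) \<Rightarrow> bool" where
  "repE E W T g \<longleftrightarrow> (\<exists>F c. finite F \<and> F \<subseteq> W \<and> (\<forall>w\<in>F. c w \<in> E) \<and> (\<forall>\<rho>\<in>T. g \<rho> = (\<Sum>w\<in>F. c w *s app \<rho> w)))"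

definition SpanC :: "(complex ^ 'n) set \<Rightarrow> (complex \<Rightarrow> complex) set \<Rightarrow> bool" where
  "SpanC W T \<longleftrightarrow> (\<forall>g. rep W T g)"

definition SpanE :: "complex set \<Rightarrow> (complex ^ 'n) set \<Rightarrow> (complex \<Rightarrow> complex) set \<Rightarrow> bool" where
  "SpanE E W T \<longleftrightarrow> (\<forall>g. (\<forall>\<rho>\<in>T. \<forall>i. g \<rho> $ i \<in> E) \<longrightarrow> repE E W T g)"

lemma gal_maps: "\<rho> \<in> Gal E \<Longrightarrow> x \<in> E \<Longrightarrow> \<rho> x \<in> E"
  unfolding Gal_def by auto

lemma spanC_spanE:
  fixes W :: "(complex ^ 'n) set"
  assumes sf: "subfield_C E" and fT: "finite T" and TG: "T \<subseteq> Gal E" and WV: "W \<subseteq> Vspace E"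
    and S: "SpanC W T"
  shows "SpanE E W (T :: (complex \<Rightarrow> complex) set)"
  unfolding SpanE_def
proof (intro allI impI)
  fix g :: "(complex \<Rightarrow> complex) \<Rightarrow> complex ^ 'n"
  assume gE: "\<forall>\<rho>\<in>T. \<forall>i. g \<rho> $ i \<in> E"
  obtain F :: "(complex ^ 'n) set" and c where F: "finite F" "F \<subseteq> W" "\<forall>\<rho>\<in>T. g \<rho> = (\<Sum>w\<in>F. c w *s app \<rho> w)"
    using S unfolding SpanC_def rep_def by blast
  have wE: "w \<in> F \<Longrightarrow> w $ i \<in> E" for w i using F(2) WV unfolding Vspace_def by auto
  have "\<exists>d. (\<forall>j\<in>F. d j \<in> E) \<and> (\<forall>r\<in>T \<times> UNIV. (\<Sum>j\<in>F. d j * (\<lambda>w (\<rho>, i). \<rho> (w $ i)) j r) = (\<lambda>(\<rho>, i). g \<rho> $ i) r)"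
  proof (rule solve_sub[OF sf _ F(1), of "T \<times> UNIV" _ _ c])
    show "finite (T \<times> (UNIV :: 'n set))" using fT by simp
    show "\<forall>j\<in>F. \<forall>r\<in>T \<times> UNIV. (\<lambda>w (\<rho>, i). \<rho> (w $ i)) j r \<in> E"
      using TG wE gal_maps by (auto simp: subset_iff)
    show "\<forall>r\<in>T \<times> UNIV. (\<lambda>(\<rho>, i). g \<rho> $ i) r \<in> E" using gE by auto
    show "\<forall>r\<in>T \<times> UNIV. (\<Sum>j\<in>F. c j * (\<lambda>w (\<rho>, i). \<rho> (w $ i)) j r) = (\<lambda>(\<rho>, i). g \<rho> $ i) r"
      using F(3) by (auto simp: app_def)
  qed
  then obtain d where d: "\<forall>j\<in>F. d j \<in> E" "\<forall>\<rho>\<in>T. \<forall>i. (\<Sum>j\<in>F. d j * \<rho> (j $ i)) = g \<rho> $ i"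
    by auto
  show "repE E W T g" unfolding repE_def
    using F(1,2) d by (intro exI[of _ F] exI[of _ d]) (auto simp: vec_eq_iff app_def)
qed

lemma rep_zero: "rep W T (\<lambda>\<rho>. 0)"
  unfolding rep_def by (intro exI[of _ "{}"]) auto

lemma rep_cong: "rep W T g \<Longrightarrow> (\<And>\<rho>. \<rho> \<in> T \<Longrightarrow> g \<rho> = h \<rho>) \<Longrightarrow> rep W T h"
  unfolding rep_def by metis

lemma sum_scale_vec: "(\<Sum>x\<in>F. (a * c x) *s v x) = a *s (\<Sum>x\<in>F. c x *s (v x :: complex ^ 'n))"
  by (simp add: vec_eq_iff sum_distrib_left mult.assoc)

lemma rep_scale: "rep W T g \<Longrightarrow> rep W T (\<lambda>\<rho>. a *s g \<rho>)"
  unfolding rep_def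
proof (elim exE conjE)
  fix F c assume "finite F" "F \<subseteq> W" "\<forall>\<rho>\<in>T. g \<rho> = (\<Sum>w\<in>F. c w *s app \<rho> w)"
  then show "\<exists>F c. finite F \<and> F \<subseteq> W \<and> (\<forall>\<rho>\<in>T. a *s g \<rho> = (\<Sum>w\<in>F. c w *s app \<rho> w))"
    by (intro exI[of _ F] exI[of _ "\<lambda>w. a * c w"]) (simp add: sum_scale_vec)
qed

lemma sum_extend_vec:
  assumes "finite G" "F \<subseteq> G"
  shows "(\<Sum>w\<in>G. (if w \<in> F then c w else 0) *s (v w :: complex ^ 'n)) = (\<Sum>w\<in>F. c w *s v w)"
proof -
  have "(\<Sum>w\<in>G. (if w \<in> F then c w else 0) *s v w) = (\<Sum>w\<in>G. if w \<in> F then c w *s v w else 0)"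
    by (intro sum.cong) auto
  also have "\<dots> = (\<Sum>w\<in>G \<inter> F. c w *s v w)" using assms(1) by (simp add: sum.inter_restrict)
  also have "G \<inter> F = F" using assms(2) by auto
  finally show ?thesis .
qed

lemma rep_add: "rep W T g \<Longrightarrow> rep W T h \<Longrightarrow> rep W T (\<lambda>\<rho>. g \<rho> + h \<rho>)"
  unfolding rep_def
proof (elim exE conjE)
  fix F c F' c'
  assume F: "finite F" "F \<subseteq> W" "\<forall>\<rho>\<in>T. g \<rho> = (\<Sum>w\<in>F. c w *s app \<rho> w)"
    and F': "finite F'" "F' \<subseteq> W" "\<forall>\<rho>\<in>T. h \<rho> = (\<Sum>w\<in>F'. c' w *s app \<rho> w)"
  define d where "d = (\<lambda>w. (if w \<in> F then c w else 0) + (if w \<in> F' then c' w else 0))"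
  have "(\<Sum>w\<in>F \<union> F'. d w *s app \<rho> w) = (\<Sum>w\<in>F. c w *s app \<rho> w) + (\<Sum>w\<in>F'. c' w *s app \<rho> w)" for \<rho>
    unfolding d_def vector_sadd_rdistrib sum.distrib
    using sum_extend_vec[of "F \<union> F'" F c "app \<rho>"] sum_extend_vec[of "F \<union> F'" F' c' "app \<rho>"] F(1) F'(1) by simp
  then show "\<exists>F c. finite F \<and> F \<subseteq> W \<and> (\<forall>\<rho>\<in>T. g \<rho> + h \<rho> = (\<Sum>w\<in>F. c w *s app \<rho> w))"
    using F F' by (intro exI[of _ "F \<union> F'"] exI[of _ d]) auto
qed

lemma rep_sum: "finite K \<Longrightarrow> (\<And>k. k \<in> K \<Longrightarrow> rep W T (G k)) \<Longrightarrow> rep W T (\<lambda>\<rho>. \<Sum>k\<in>K. G k \<rho>)"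
proof (induction K rule: finite_induct)
  case empty then show ?case using rep_zero by simp
next
  case (insert x F) then show ?case using rep_add[of W T "G x" "\<lambda>\<rho>. \<Sum>k\<in>F. G k \<rho>"] by simp
qed

lemma spanE_spanC:
  fixes W :: "(complex ^ 'n) set"
  assumes sf: "subfield_C E" and fT: "finite T" and S: "SpanE E W T"
  shows "SpanC W T"
  unfolding SpanC_def
proof
  fix g :: "(complex \<Rightarrow> complex) \<Rightarrow> complex ^ 'n"
  define u :: "(complex \<Rightarrow> complex) \<times> 'n \<Rightarrow> (complex \<Rightarrow> complex) \<Rightarrow> complex ^ 'n"
    where "u = (\<lambda>(\<rho>0, i) \<rho>. if \<rho> = \<rho>0 then (axis i 1 :: complex ^ 'n) else 0)"
  have ru: "rep W T (u k)" for k
  proof -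
    have "repE E W T (u k)" using S unfolding SpanE_def
      using sf_basic[OF sf] by (auto simp: u_def axis_def split: prod.splits)
    then show ?thesis unfolding repE_def rep_def by blast
  qed
  have "rep W T (\<lambda>\<rho>. \<Sum>k\<in>T \<times> UNIV. (case k of (\<rho>0, i) \<Rightarrow> g \<rho>0 $ i) *s u k \<rho>)"
    using fT by (intro rep_sum rep_scale ru) auto
  moreover have "(\<Sum>k\<in>T \<times> UNIV. (case k of (\<rho>0, i) \<Rightarrow> g \<rho>0 $ i) *s u k \<rho>) = g \<rho>" if "\<rho> \<in> T" for \<rho>
  proof (subst vec_eq_iff, intro allI)
    fix j
    have "(\<Sum>k\<in>T \<times> UNIV. (case k of (\<rho>0, i) \<Rightarrow> g \<rho>0 $ i) *s u k \<rho>) $ j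
        = (\<Sum>k\<in>T \<times> UNIV. if k = (\<rho>, j) then g \<rho> $ j else 0)"
      unfolding sum_component by (intro sum.cong) (auto simp: u_def axis_def split: if_splits)
    also have "\<dots> = g \<rho> $ j" using that fT by (simp add: sum.delta')
    finally show "(\<Sum>k\<in>T \<times> UNIV. (case k of (\<rho>0, i) \<Rightarrow> g \<rho>0 $ i) *s u k \<rho>) $ j = g \<rho> $ j" .
  qed
  ultimately show "rep W T g" by (rule rep_cong)
qed



lemma emb_add: "\<rho> \<in> embeddings E \<Longrightarrow> x \<in> E \<Longrightarrow> y \<in> E \<Longrightarrow> \<rho> (x + y) = \<rho> x + \<rho> y"
  and emb_mult: "\<rho> \<in> embeddings E \<Longrightarrow> x \<in> E \<Longrightarrow> y \<in> E \<Longrightarrow> \<rho> (x * y) = \<rho> x * \<rho> y"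
  and emb_one: "\<rho> \<in> embeddings E \<Longrightarrow> \<rho> 1 = 1"
  and emb_out: "\<rho> \<in> embeddings E \<Longrightarrow> x \<notin> E \<Longrightarrow> \<rho> x = 0"
  unfolding embeddings_def by auto

lemma emb_zero: "subfield_C E \<Longrightarrow> \<rho> \<in> embeddings E \<Longrightarrow> \<rho> 0 = 0"
  using emb_add[of \<rho> E 0 0] sf_basic(1)[of E] by simp

lemma emb_neg: "subfield_C E \<Longrightarrow> \<rho> \<in> embeddings E \<Longrightarrow> x \<in> E \<Longrightarrow> \<rho> (- x) = - \<rho> x"
  using emb_add[of \<rho> E x "- x"] sf_basic(5)[of E x] emb_zero[of E \<rho>]
  by (simp add: eq_neg_iff_add_eq_0 add.commute)

lemma emb_inj: assumes sf: "subfield_C E" and r: "\<rho> \<in> embeddings E" shows "inj_on \<rho> E"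
proof (rule inj_onI)
  fix x y assume x: "x \<in> E" and y: "y \<in> E" and eq: "\<rho> x = \<rho> y"
  have d: "x - y \<in> E" using sf_basic(6)[OF sf x y] .
  have "\<rho> (x - y) = 0"
    using emb_add[OF r x sf_basic(5)[OF sf y]] emb_neg[OF sf r y] eq by simp
  show "x = y"
  proof (rule ccontr)
    assume "x \<noteq> y"
    then have "inverse (x - y) \<in> E" using sf d unfolding subfield_C_def by auto
    then have "\<rho> ((x - y) * inverse (x - y)) = 0" using emb_mult[OF r d] \<open>\<rho> (x - y) = 0\<close> by simp
    then show False using \<open>x \<noteq> y\<close> emb_one[OF r] by simp
  qed
qed

lemma emb_sum: assumes sf: "subfield_C E" and r: "\<rho> \<in> embeddings E"
  shows "(\<And>j. j \<in> J \<Longrightarrow> f j \<in> E) \<Longrightarrow> \<rho> (\<Sum>j\<in>J. f j) = (\<Sum>j\<in>J. \<rho> (f j))"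
proof (induction J rule: infinite_finite_induct)
  case (infinite A) then show ?case using emb_zero[OF sf r] by simp
next
  case empty then show ?case using emb_zero[OF sf r] by simp
next
  case (insert x F) then show ?case using emb_add[OF r] sf_sum[OF sf, of F f] by simp
qed

lemma gal_comp: assumes sf: "subfield_C E" and k: "\<kappa> \<in> Gal E" and r: "\<rho> \<in> Gal E"
  shows "\<kappa> \<circ> \<rho> \<in> Gal E"
proof -
  have ke: "\<kappa> \<in> embeddings E" and re: "\<rho> \<in> embeddings E" using k r unfolding Gal_def by auto
  have "\<kappa> \<circ> \<rho> \<in> embeddings E" unfolding embeddings_def
  proof (intro CollectI conjI ballI allI impI)
    fix x y assume x: "x \<in> E" and y: "y \<in> E"
    show "(\<kappa> \<circ> \<rho>) (x + y) = (\<kappa> \<circ> \<rho>) x + (\<kappa> \<circ> \<rho>) y"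
      using emb_add[OF re x y] emb_add[OF ke gal_maps[OF r x] gal_maps[OF r y]] by simp
    show "(\<kappa> \<circ> \<rho>) (x * y) = (\<kappa> \<circ> \<rho>) x * (\<kappa> \<circ> \<rho>) y"
      using emb_mult[OF re x y] emb_mult[OF ke gal_maps[OF r x] gal_maps[OF r y]] by simp
  next
    show "(\<kappa> \<circ> \<rho>) 1 = 1" using emb_one[OF ke] emb_one[OF re] by simp
  next
    fix x assume "x \<notin> E" then show "(\<kappa> \<circ> \<rho>) x = 0" using emb_out[OF re] emb_zero[OF sf ke] by simp
  qed
  moreover have "(\<kappa> \<circ> \<rho>) ` E = \<kappa> ` (\<rho> ` E)" by (simp only: image_comp)
  then have "(\<kappa> \<circ> \<rho>) ` E = E" using k r unfolding Gal_def by simp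
  ultimately show ?thesis unfolding Gal_def by auto
qed

lemma push:
  fixes W :: "(complex ^ 'n) set"
  assumes sf: "subfield_C E" and TG: "T \<subseteq> Gal E" and k: "\<kappa> \<in> Gal E" and WV: "W \<subseteq> Vspace E"
    and S: "SpanE E W T"
  shows "SpanE E W ((\<lambda>\<rho>. \<kappa> \<circ> \<rho>) ` T)"
  unfolding SpanE_def
proof (intro allI impI)
  fix g :: "(complex \<Rightarrow> complex) \<Rightarrow> complex ^ 'n"
  assume gE: "\<forall>\<rho>\<in>(\<lambda>\<rho>. \<kappa> \<circ> \<rho>) ` T. \<forall>i. g \<rho> $ i \<in> E"
  have ke: "\<kappa> \<in> embeddings E" and kE: "\<kappa> ` E = E" using k unfolding Gal_def by auto
  define h :: "(complex \<Rightarrow> complex) \<Rightarrow> complex ^ 'n" where "h = (\<lambda>\<rho>. \<chi> i. inv_into E \<kappa> (g (\<kappa> \<circ> \<rho>) $ i))"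
  have hE: "\<forall>\<rho>\<in>T. \<forall>i. h \<rho> $ i \<in> E" unfolding h_def using gE kE by (metis (no_types, lifting) image_eqI inv_into_into vec_lambda_beta)
  have hk: "\<rho> \<in> T \<Longrightarrow> \<kappa> (h \<rho> $ i) = g (\<kappa> \<circ> \<rho>) $ i" for \<rho> i
    unfolding h_def using gE kE by (metis (no_types, lifting) image_eqI f_inv_into_f vec_lambda_beta)
  obtain F :: "(complex ^ 'n) set" and d where F: "finite F" "F \<subseteq> W" "\<forall>w\<in>F. d w \<in> E"
    "\<forall>\<rho>\<in>T. h \<rho> = (\<Sum>w\<in>F. d w *s app \<rho> w)"
    using S[unfolded SpanE_def, THEN spec[of _ h], THEN mp, OF hE] unfolding repE_def by blast
  have wE: "w \<in> F \<Longrightarrow> w $ i \<in> E" for w i using F(2) WV unfolding Vspace_def by auto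
  show "repE E W ((\<lambda>\<rho>. \<kappa> \<circ> \<rho>) ` T) g" unfolding repE_def
  proof (intro exI[of _ F] exI[of _ "\<lambda>w. \<kappa> (d w)"] conjI ballI)
    show "finite F" "F \<subseteq> W" using F by auto
    fix w assume "w \<in> F" then show "\<kappa> (d w) \<in> E" using F(3) gal_maps[OF k] by auto
  next
    fix \<rho>' assume "\<rho>' \<in> (\<lambda>\<rho>. \<kappa> \<circ> \<rho>) ` T"
    then obtain \<rho> where r: "\<rho> \<in> T" "\<rho>' = \<kappa> \<circ> \<rho>" by auto
    have rG: "\<rho> \<in> Gal E" using r TG by auto
    show "g \<rho>' = (\<Sum>w\<in>F. \<kappa> (d w) *s app \<rho>' w)"
    proof (subst vec_eq_iff, intro allI)
      fix i
      have "g \<rho>' $ i = \<kappa> (h \<rho> $ i)" using hk r by simp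
      also have "\<dots> = \<kappa> (\<Sum>w\<in>F. d w * \<rho> (w $ i))" using F(4) r by (simp add: app_def)
      also have "\<dots> = (\<Sum>w\<in>F. \<kappa> (d w * \<rho> (w $ i)))"
        by (rule emb_sum[OF sf ke]) (use F(3) wE gal_maps[OF rG] sf_basic(4)[OF sf] in blast)
      also have "\<dots> = (\<Sum>w\<in>F. \<kappa> (d w) * \<kappa> (\<rho> (w $ i)))"
        by (intro sum.cong refl emb_mult[OF ke]) (use F(3) wE gal_maps[OF rG] in blast)+
      also have "\<dots> = (\<Sum>w\<in>F. \<kappa> (d w) *s app \<rho>' w) $ i" using r by (simp add: app_def)
      finally show "g \<rho>' $ i = (\<Sum>w\<in>F. \<kappa> (d w) *s app \<rho>' w) $ i" .
    qed
  qed
qed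


lemma gal_trans:
  assumes sf: "subfield_C E" and s0: "\<sigma>0 \<in> Gal E" and s: "\<sigma> \<in> Gal E"
  shows "\<exists>\<kappa>\<in>Gal E. \<kappa> \<circ> \<sigma>0 = \<sigma>"
proof -
  have e0: "\<sigma>0 \<in> embeddings E" and E0: "\<sigma>0 ` E = E" and e: "\<sigma> \<in> embeddings E" and Es: "\<sigma> ` E = E"
    using s0 s unfolding Gal_def by auto
  have inj0: "inj_on \<sigma>0 E" by (rule emb_inj[OF sf e0])
  define iv where "iv = inv_into E \<sigma>0"
  have ivE: "x \<in> E \<Longrightarrow> iv x \<in> E" for x unfolding iv_def using E0 by (metis inv_into_into)
  have siv: "x \<in> E \<Longrightarrow> \<sigma>0 (iv x) = x" for x unfolding iv_def using E0 by (metis f_inv_into_f)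
  have ivs: "x \<in> E \<Longrightarrow> iv (\<sigma>0 x) = x" for x unfolding iv_def using inj0 by (rule inv_into_f_f)
  define \<kappa> where "\<kappa> = (\<lambda>x. if x \<in> E then \<sigma> (iv x) else 0)"
  have ke: "\<kappa> \<in> embeddings E" unfolding embeddings_def
  proof (intro CollectI conjI ballI allI impI)
    fix x y assume x: "x \<in> E" and y: "y \<in> E"
    have "iv (x + y) = iv x + iv y"
    proof -
      have "\<sigma>0 (iv x + iv y) = x + y" using emb_add[OF e0 ivE[OF x] ivE[OF y]] siv x y by simp
      then show ?thesis using ivs[of "iv x + iv y"] sf_basic(3)[OF sf ivE[OF x] ivE[OF y]] by simp
    qed
    then show "\<kappa> (x + y) = \<kappa> x + \<kappa> y" unfolding \<kappa>_def
      using x y sf_basic(3)[OF sf x y] emb_add[OF e ivE[OF x] ivE[OF y]] by simp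
    have "iv (x * y) = iv x * iv y"
    proof -
      have "\<sigma>0 (iv x * iv y) = x * y" using emb_mult[OF e0 ivE[OF x] ivE[OF y]] siv x y by simp
      then show ?thesis using ivs[of "iv x * iv y"] sf_basic(4)[OF sf ivE[OF x] ivE[OF y]] by simp
    qed
    then show "\<kappa> (x * y) = \<kappa> x * \<kappa> y" unfolding \<kappa>_def
      using x y sf_basic(4)[OF sf x y] emb_mult[OF e ivE[OF x] ivE[OF y]] by simp
  next
    show "\<kappa> 1 = 1" unfolding \<kappa>_def using sf_basic(2)[OF sf] ivs[of 1] emb_one[OF e0] emb_one[OF e] by simp
  next
    fix x assume "x \<notin> E" then show "\<kappa> x = 0" unfolding \<kappa>_def by simp
  qed
  have comp: "\<kappa> \<circ> \<sigma>0 = \<sigma>"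
  proof
    fix x show "(\<kappa> \<circ> \<sigma>0) x = \<sigma> x"
    proof (cases "x \<in> E")
      case True then show ?thesis unfolding \<kappa>_def using gal_maps[OF s0 True] ivs by simp
    next
      case False
      have "\<kappa> 0 = 0" using emb_zero[OF sf ke] .
      then show ?thesis using False emb_out[OF e0 False] emb_out[OF e False] by simp
    qed
  qed
  have "\<kappa> ` E = E"
  proof -
    have "\<kappa> ` E = \<kappa> ` (\<sigma>0 ` E)" using E0 by simp
    also have "\<dots> = (\<kappa> \<circ> \<sigma>0) ` E" by (simp only: image_comp)
    also have "\<dots> = E" using comp Es by simp
    finally show ?thesis .
  qed
  then show ?thesis using ke comp unfolding Gal_def by auto
qed

lemma cond_iff:
  fixes W :: "(complex ^ 'n) set"
  assumes TG: "T \<subseteq> Gal E"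
  shows "((\<lambda>f \<rho>. if \<rho> \<in> T then f \<rho> else 0) ` WC E W = {g. \<forall>\<rho>. \<rho> \<notin> T \<longrightarrow> g \<rho> = 0}) \<longleftrightarrow> SpanC W T"
proof
  assume A: "(\<lambda>f \<rho>. if \<rho> \<in> T then f \<rho> else 0) ` WC E W = {g. \<forall>\<rho>. \<rho> \<notin> T \<longrightarrow> g \<rho> = 0}"
  show "SpanC W T" unfolding SpanC_def rep_def
  proof
    fix g :: "(complex \<Rightarrow> complex) \<Rightarrow> complex ^ 'n"
    have "(\<lambda>\<rho>. if \<rho> \<in> T then g \<rho> else 0) \<in> {g. \<forall>\<rho>. \<rho> \<notin> T \<longrightarrow> g \<rho> = 0}" by simp
    then obtain f where f: "f \<in> WC E W" and fg: "(\<lambda>\<rho>. if \<rho> \<in> T then f \<rho> else 0) = (\<lambda>\<rho>. if \<rho> \<in> T then g \<rho> else 0)"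
      unfolding A[symmetric] by auto
    obtain F c where F: "finite F" "F \<subseteq> W" "f = (\<lambda>\<sigma>. \<Sum>w\<in>F. c w *s iota E w \<sigma>)"
      using f unfolding WC_def by blast
    have "\<forall>\<rho>\<in>T. g \<rho> = (\<Sum>w\<in>F. c w *s app \<rho> w)"
    proof
      fix \<rho> assume r: "\<rho> \<in> T"
      then have "g \<rho> = f \<rho>" using fun_cong[OF fg, of \<rho>] by simp
      also have "\<dots> = (\<Sum>w\<in>F. c w *s app \<rho> w)" using F(3) r TG
        by (auto simp: iota_def app_def)
      finally show "g \<rho> = (\<Sum>w\<in>F. c w *s app \<rho> w)" .
    qed
    then show "\<exists>F c. finite F \<and> F \<subseteq> W \<and> (\<forall>\<rho>\<in>T. g \<rho> = (\<Sum>w\<in>F. c w *s app \<rho> w))"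
      using F by blast
  qed
next
  assume S: "SpanC W T"
  show "(\<lambda>f \<rho>. if \<rho> \<in> T then f \<rho> else 0) ` WC E W = {g. \<forall>\<rho>. \<rho> \<notin> T \<longrightarrow> g \<rho> = 0}"
  proof (intro equalityI subsetI)
    fix g assume "g \<in> (\<lambda>f \<rho>. if \<rho> \<in> T then f \<rho> else 0) ` WC E W"
    then show "g \<in> {g. \<forall>\<rho>. \<rho> \<notin> T \<longrightarrow> g \<rho> = 0}" by auto
  next
    fix g :: "(complex \<Rightarrow> complex) \<Rightarrow> complex ^ 'n"
    assume g: "g \<in> {g. \<forall>\<rho>. \<rho> \<notin> T \<longrightarrow> g \<rho> = 0}"
    obtain F c where F: "finite F" "F \<subseteq> W" "\<forall>\<rho>\<in>T. g \<rho> = (\<Sum>w\<in>F. c w *s app \<rho> w)"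
      using S[unfolded SpanC_def, THEN spec[of _ g]] unfolding rep_def by blast
    define f where "f = (\<lambda>\<sigma>. \<Sum>w\<in>F. c w *s iota E w \<sigma>)"
    have "f \<in> WC E W" unfolding WC_def f_def using F(1,2) by blast
    moreover have "g = (\<lambda>\<rho>. if \<rho> \<in> T then f \<rho> else 0)"
    proof
      fix \<rho> show "g \<rho> = (if \<rho> \<in> T then f \<rho> else 0)"
        using g F(3) TG by (auto simp: f_def iota_def app_def)
    qed
    ultimately show "g \<in> (\<lambda>f \<rho>. if \<rho> \<in> T then f \<rho> else 0) ` WC E W" by blast
  qed
qed

lemma Vsig_char:
  assumes s: "\<sigma> \<in> Gal E"
  shows "Vsig E \<sigma> = {g :: (complex \<Rightarrow> complex) \<Rightarrow> complex ^ 'n. \<forall>\<rho>. \<rho> \<notin> {\<sigma>} \<longrightarrow> g \<rho> = 0}"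
proof (intro equalityI subsetI)
  fix g :: "(complex \<Rightarrow> complex) \<Rightarrow> complex ^ 'n" assume g: "g \<in> Vsig E \<sigma>"
  show "g \<in> {g :: (complex \<Rightarrow> complex) \<Rightarrow> complex ^ 'n. \<forall>\<rho>. \<rho> \<notin> {\<sigma>} \<longrightarrow> g \<rho> = 0}"
  proof (intro CollectI allI impI)
    fix \<rho> assume "\<rho> \<notin> {\<sigma>}"
    then have ne: "\<rho> \<noteq> \<sigma>" by simp
    show "g \<rho> = 0"
    proof (cases "\<rho> \<in> Gal E")
      case False then show ?thesis using g unfolding Vsig_def VC_def by auto
    next
      case True
      obtain x where x: "\<rho> x \<noteq> \<sigma> x" using ne by auto
      have xE: "x \<in> E"
      proof (rule ccontr)
        assume "x \<notin> E"
        then show False using x True s emb_out[of \<rho> E x] emb_out[of \<sigma> E x] unfolding Gal_def by auto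
      qed
      have "Eact x g \<rho> = \<sigma> x *s g \<rho>" using g xE unfolding Vsig_def by auto
      then have "\<rho> x *s g \<rho> = \<sigma> x *s g \<rho>" unfolding Eact_def by simp
      then have "(\<rho> x - \<sigma> x) *s g \<rho> = 0" by (simp add: vec_eq_iff algebra_simps)
      then show ?thesis using x by (simp add: vec_eq_iff)
    qed
  qed
next
  fix g :: "(complex \<Rightarrow> complex) \<Rightarrow> complex ^ 'n" assume g: "g \<in> {g :: (complex \<Rightarrow> complex) \<Rightarrow> complex ^ 'n. \<forall>\<rho>. \<rho> \<notin> {\<sigma>} \<longrightarrow> g \<rho> = 0}"
  then have g0: "\<And>\<rho>. \<rho> \<noteq> \<sigma> \<Longrightarrow> g \<rho> = 0" by auto
  have "g \<in> VC E" unfolding VC_def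
  proof (intro CollectI allI impI)
    fix \<rho> assume "\<rho> \<notin> Gal E" then have "\<rho> \<noteq> \<sigma>" using s by auto
    then show "g \<rho> = 0" by (rule g0)
  qed
  moreover have "Eact e g = (\<lambda>\<tau>. \<sigma> e *s g \<tau>)" for e
  proof
    fix \<tau> show "Eact e g \<tau> = \<sigma> e *s g \<tau>" unfolding Eact_def by (cases "\<tau> = \<sigma>") (auto simp: g0)
  qed
  ultimately show "g \<in> Vsig E \<sigma>" unfolding Vsig_def by auto
qed

lemma Vsum_char:
  fixes E :: "complex set"
  assumes s: "\<sigma> \<in> Gal E" and t: "\<tau> \<in> Gal E"
  shows "Vsum (Vsig E \<sigma>) (Vsig E \<tau>) = {g :: (complex \<Rightarrow> complex) \<Rightarrow> complex ^ 'n. \<forall>\<rho>. \<rho> \<notin> {\<sigma>, \<tau>} \<longrightarrow> g \<rho> = 0}"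
  unfolding Vsig_char[OF s] Vsig_char[OF t] Vsum_def
proof (intro equalityI subsetI)
  fix g :: "(complex \<Rightarrow> complex) \<Rightarrow> complex ^ 'n" assume "g \<in> {\<lambda>\<rho>. a \<rho> + b \<rho> |a b. a \<in> {g :: (complex \<Rightarrow> complex) \<Rightarrow> complex ^ 'n. \<forall>\<rho>. \<rho> \<notin> {\<sigma>} \<longrightarrow> g \<rho> = 0} \<and> b \<in> {g :: (complex \<Rightarrow> complex) \<Rightarrow> complex ^ 'n. \<forall>\<rho>. \<rho> \<notin> {\<tau>} \<longrightarrow> g \<rho> = 0}}"
  then show "g \<in> {g :: (complex \<Rightarrow> complex) \<Rightarrow> complex ^ 'n. \<forall>\<rho>. \<rho> \<notin> {\<sigma>, \<tau>} \<longrightarrow> g \<rho> = 0}" by (auto simp: vec_eq_iff)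
next
  fix g :: "(complex \<Rightarrow> complex) \<Rightarrow> complex ^ 'n" assume g: "g \<in> {g :: (complex \<Rightarrow> complex) \<Rightarrow> complex ^ 'n. \<forall>\<rho>. \<rho> \<notin> {\<sigma>, \<tau>} \<longrightarrow> g \<rho> = 0}"
  define a where "a = (\<lambda>\<rho>. if \<rho> = \<sigma> then g \<rho> else 0)"
  define b where "b = (\<lambda>\<rho>. if \<rho> = \<tau> \<and> \<rho> \<noteq> \<sigma> then g \<rho> else 0)"
  have "g = (\<lambda>\<rho>. a \<rho> + b \<rho>)" using g unfolding a_def b_def by (auto simp: fun_eq_iff)
  moreover have "a \<in> {g :: (complex \<Rightarrow> complex) \<Rightarrow> complex ^ 'n. \<forall>\<rho>. \<rho> \<notin> {\<sigma>} \<longrightarrow> g \<rho> = 0}" "b \<in> {g :: (complex \<Rightarrow> complex) \<Rightarrow> complex ^ 'n. \<forall>\<rho>. \<rho> \<notin> {\<tau>} \<longrightarrow> g \<rho> = 0}"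
    unfolding a_def b_def by auto
  ultimately show "g \<in> {\<lambda>\<rho>. a \<rho> + b \<rho> |a b. a \<in> {g :: (complex \<Rightarrow> complex) \<Rightarrow> complex ^ 'n. \<forall>\<rho>. \<rho> \<notin> {\<sigma>} \<longrightarrow> g \<rho> = 0} \<and> b \<in> {g :: (complex \<Rightarrow> complex) \<Rightarrow> complex ^ 'n. \<forall>\<rho>. \<rho> \<notin> {\<tau>} \<longrightarrow> g \<rho> = 0}}"
    by blast
qed


lemma Psig_eq: "Psig \<sigma> = (\<lambda>f \<rho>. if \<rho> \<in> {\<sigma>} then f \<rho> else 0)"
  unfolding Psig_def by auto

lemma Ppair_eq: "Ppair \<sigma> \<tau> = (\<lambda>f \<rho>. if \<rho> \<in> {\<sigma>, \<tau>} then f \<rho> else 0)"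
  unfolding Ppair_def by auto

theorem lemma2p1:
  fixes E :: "complex set" and W :: "(complex ^ 'n) set"
  assumes "galois_over_Q E" and "Q_subspace E W"
  shows "((\<exists>\<sigma>0\<in>Gal E. Psig \<sigma>0 ` WC E W = Vsig E \<sigma>0)
           \<longrightarrow> (\<forall>\<sigma>\<in>Gal E. Psig \<sigma> ` WC E W = Vsig E \<sigma>))
       \<and> (\<forall>\<sigma>0\<in>Gal E. \<forall>\<tau>0\<in>Gal E. \<sigma>0 \<noteq> \<tau>0 \<longrightarrow>
            Ppair \<sigma>0 \<tau>0 ` WC E W = Vsum (Vsig E \<sigma>0) (Vsig E \<tau>0) \<longrightarrow>
            (\<forall>\<kappa>\<in>Gal E. Ppair (\<kappa> \<circ> \<sigma>0) (\<kappa> \<circ> \<tau>0) ` WC E W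
                          = Vsum (Vsig E (\<kappa> \<circ> \<sigma>0)) (Vsig E (\<kappa> \<circ> \<tau>0))))"
proof (intro conjI impI ballI)
  have sf: "subfield_C E" using assms(1) unfolding galois_over_Q_def by auto
  have WV: "W \<subseteq> Vspace E" using assms(2) unfolding Q_subspace_def by auto
  {
    assume "\<exists>\<sigma>0\<in>Gal E. Psig \<sigma>0 ` WC E W = Vsig E \<sigma>0"
    then obtain \<sigma>0 where s0: "\<sigma>0 \<in> Gal E" and c0: "Psig \<sigma>0 ` WC E W = Vsig E \<sigma>0" by blast
    fix \<sigma> assume s: "\<sigma> \<in> Gal E"
    have T0: "{\<sigma>0} \<subseteq> Gal E" using s0 by auto
    have "SpanC W {\<sigma>0}"
      using c0 unfolding Psig_eq Vsig_char[OF s0] cond_iff[OF T0] .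
    then have "SpanE E W {\<sigma>0}" by (intro spanC_spanE[OF sf _ T0 WV]) auto
    moreover obtain \<kappa> where k: "\<kappa> \<in> Gal E" "\<kappa> \<circ> \<sigma>0 = \<sigma>" using gal_trans[OF sf s0 s] by blast
    ultimately have "SpanE E W ((\<lambda>\<rho>. \<kappa> \<circ> \<rho>) ` {\<sigma>0})" by (intro push[OF sf T0 k(1) WV])
    then have "SpanE E W {\<sigma>}" using k(2) by simp
    then have "SpanC W {\<sigma>}" by (intro spanE_spanC[OF sf]) auto
    moreover have T: "{\<sigma>} \<subseteq> Gal E" using s by auto
    ultimately show "Psig \<sigma> ` WC E W = Vsig E \<sigma>"
      unfolding Psig_eq Vsig_char[OF s] cond_iff[OF T] by blast
  }
  {
    fix \<sigma>0 \<tau>0 \<kappa> assume s0: "\<sigma>0 \<in> Gal E" and t0: "\<tau>0 \<in> Gal E"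
      and c0: "Ppair \<sigma>0 \<tau>0 ` WC E W = Vsum (Vsig E \<sigma>0) (Vsig E \<tau>0)" and k: "\<kappa> \<in> Gal E"
    have T0: "{\<sigma>0, \<tau>0} \<subseteq> Gal E" using s0 t0 by auto
    have "SpanC W {\<sigma>0, \<tau>0}"
      using c0 unfolding Ppair_eq Vsum_char[OF s0 t0] cond_iff[OF T0] .
    then have "SpanE E W {\<sigma>0, \<tau>0}" by (intro spanC_spanE[OF sf _ T0 WV]) auto
    then have "SpanE E W ((\<lambda>\<rho>. \<kappa> \<circ> \<rho>) ` {\<sigma>0, \<tau>0})" by (intro push[OF sf T0 k WV])
    then have "SpanE E W {\<kappa> \<circ> \<sigma>0, \<kappa> \<circ> \<tau>0}" by simp
    then have "SpanC W {\<kappa> \<circ> \<sigma>0, \<kappa> \<circ> \<tau>0}" by (intro spanE_spanC[OF sf]) auto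
    moreover have s1: "\<kappa> \<circ> \<sigma>0 \<in> Gal E" and t1: "\<kappa> \<circ> \<tau>0 \<in> Gal E"
      using gal_comp[OF sf k s0] gal_comp[OF sf k t0] .
    moreover have T: "{\<kappa> \<circ> \<sigma>0, \<kappa> \<circ> \<tau>0} \<subseteq> Gal E" using s1 t1 by auto
    ultimately show "Ppair (\<kappa> \<circ> \<sigma>0) (\<kappa> \<circ> \<tau>0) ` WC E W = Vsum (Vsig E (\<kappa> \<circ> \<sigma>0)) (Vsig E (\<kappa> \<circ> \<tau>0))"
      unfolding Ppair_eq Vsum_char[OF s1 t1] cond_iff[OF T] by simp
  }
qed

end
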